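(* Let $L_0\subset\mathbb{P}^2$ be a line which is not exceptional for $f$ and is disjoint from $\mathcal{I}$, and let $p_0\in\mathbb{P}^2$ be a point not in $L_0\cup f(L_0)$. Then there is a surjective linear map $T_0:\mathbb{P}^2\setminus\{p_0\}\to L_0$ such that $(T_0\circ f)|_{L_0}:L_0\to L_0$ is a hyperbolic rational map of degree $d$ (identifying $L_0\cong\mathbb{P}^1$).
   Context: $f:\mathbb{P}^2\dashrightarrow\mathbb{P}^2$ is a dominant rational map of algebraic degree $d$ with indeterminacy set $\mathcal{I}$; for a curve $V$, $f(V):=\overline{f(V\setminus\mathcal{I})}$; an irreducible curve $V$ is exceptional if $f(V)$ is a point. A surjective linear map $T_0:\mathbb{P}^2\setminus\{p_0\}\to L_0$ is one induced by a rank-2 linear map of $\mathbb{C}^3$ with kernel $p_0$ and image $L_0$. A rational map of $\mathbb{P}^1$ is hyperbolic if all its critical points lie in basins of attracting periodic points. *)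

theory Defs
  imports "HOL-Analysis.Analysis"
begin

text \<open>Points of P^2 are nonzero vectors
  of complex^3 up to nonzero scalars; subsets of P^2 are represented by the cones of
  their nonzero representatives.\<close>

definition hpoly3 :: "nat \<Rightarrow> (nat \<Rightarrow> nat \<Rightarrow> complex) \<Rightarrow> complex^3 \<Rightarrow> complex" where
  "hpoly3 d c v = (\<Sum>i\<le>d. \<Sum>j\<le>d - i. c i j * v$1 ^ i * v$2 ^ j * v$3 ^ (d - i - j))"

definition hpoly2 :: "nat \<Rightarrow> (nat \<Rightarrow> complex) \<Rightarrow> complex^2 \<Rightarrow> complex" where
  "hpoly2 d c v = (\<Sum>i\<le>d. c i * v$1 ^ i * v$2 ^ (d - i))"

definition Fv :: "nat \<Rightarrow> (3 \<Rightarrow> nat \<Rightarrow> nat \<Rightarrow> complex) \<Rightarrow> complex^3 \<Rightarrow> complex^3" where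
  "Fv d Fc v = (\<chi> k. hpoly3 d (Fc k) v)"

definition rat_map_P2 :: "nat \<Rightarrow> (3 \<Rightarrow> nat \<Rightarrow> nat \<Rightarrow> complex) \<Rightarrow> bool" where
  "rat_map_P2 d Fc \<longleftrightarrow>
     (\<exists>v. Fv d Fc v \<noteq> 0) \<and>
     \<not> (\<exists>e G H. 1 \<le> e \<and> e \<le> d \<and> (\<exists>w. hpoly3 e G w \<noteq> 0) \<and>
          (\<forall>k v. hpoly3 d (Fc k) v = hpoly3 e G v * hpoly3 (d - e) (H k) v))"

definition indet :: "nat \<Rightarrow> (3 \<Rightarrow> nat \<Rightarrow> nat \<Rightarrow> complex) \<Rightarrow> (complex^3) set" where
  "indet d Fc = {v. v \<noteq> 0 \<and> Fv d Fc v = 0}"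

definition zclosure :: "(complex^3) set \<Rightarrow> (complex^3) set" where
  "zclosure S = {w. w \<noteq> 0 \<and>
      (\<forall>e P. (\<forall>s\<in>S. hpoly3 e P s = 0) \<longrightarrow> hpoly3 e P w = 0)}"

definition fimage :: "nat \<Rightarrow> (3 \<Rightarrow> nat \<Rightarrow> nat \<Rightarrow> complex) \<Rightarrow> (complex^3) set \<Rightarrow> (complex^3) set" where
  "fimage d Fc V = zclosure {c *s Fv d Fc v | c v. c \<noteq> 0 \<and> v \<in> V \<and> v \<notin> indet d Fc}"

definition dominant :: "nat \<Rightarrow> (3 \<Rightarrow> nat \<Rightarrow> nat \<Rightarrow> complex) \<Rightarrow> bool" where
  "dominant d Fc \<longleftrightarrow> fimage d Fc (UNIV - {0}) = UNIV - {0}"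

definition ppoint :: "complex^3 \<Rightarrow> (complex^3) set" where
  "ppoint p = {c *s p | c. c \<noteq> 0}"

definition exceptional :: "nat \<Rightarrow> (3 \<Rightarrow> nat \<Rightarrow> nat \<Rightarrow> complex) \<Rightarrow> (complex^3) set \<Rightarrow> bool" where
  "exceptional d Fc V \<longleftrightarrow> (\<exists>p. p \<noteq> 0 \<and> fimage d Fc V = ppoint p)"

definition lin3 :: "complex^3 \<Rightarrow> complex^3 \<Rightarrow> complex" where
  "lin3 a v = (\<Sum>i\<in>UNIV. a$i * v$i)"

definition pline :: "complex^3 \<Rightarrow> (complex^3) set" where
  "pline a = {v. v \<noteq> 0 \<and> lin3 a v = 0}"

text \<open>A rational map of P^1 is represented by a homogeneous lift G : C^2 \<rightarrow> C^2.\<close>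

definition det2 :: "complex^2 \<Rightarrow> complex^2 \<Rightarrow> complex" where
  "det2 v w = v$1 * w$2 - v$2 * w$1"

definition pdist :: "complex^2 \<Rightarrow> complex^2 \<Rightarrow> real" where
  "pdist v w = cmod (det2 v w) / (norm v * norm w)"

definition rat_map_P1 :: "nat \<Rightarrow> (complex^2 \<Rightarrow> complex^2) \<Rightarrow> bool" where
  "rat_map_P1 d G \<longleftrightarrow> (\<exists>A B. \<forall>v. G v $ 1 = hpoly2 d A v \<and> G v $ 2 = hpoly2 d B v)
      \<and> (\<forall>v. v \<noteq> 0 \<longrightarrow> G v \<noteq> 0)"

definition dirderiv :: "(complex^2 \<Rightarrow> complex^2) \<Rightarrow> complex^2 \<Rightarrow> complex^2 \<Rightarrow> complex^2" where
  "dirderiv G p w = (\<chi> k. deriv (\<lambda>t. G (p + t *s w) $ k) 0)"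

text \<open>[c] is a critical point: the differential of [G] at [c] vanishes, i.e. every
  directional derivative of G at c is parallel to G(c).\<close>
definition critical_pt :: "(complex^2 \<Rightarrow> complex^2) \<Rightarrow> complex^2 \<Rightarrow> bool" where
  "critical_pt G c \<longleftrightarrow> c \<noteq> 0 \<and> (\<forall>w. det2 (G c) (dirderiv G c w) = 0)"

text \<open>[q] is periodic with G^n(q) = \<lambda> q, n \<ge> 1, and attracting: the multiplier m of
  [G^n] at [q], determined by det2 q (D(G^n)_q w) = \<lambda> m det2 q w, has |m| < 1.\<close>
definition attracting_periodic :: "(complex^2 \<Rightarrow> complex^2) \<Rightarrow> complex^2 \<Rightarrow> nat \<Rightarrow> bool" where
  "attracting_periodic G q n \<longleftrightarrow> q \<noteq> 0 \<and> 1 \<le> n \<and>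
     (\<exists>l. (G ^^ n) q = l *s q \<and>
        (\<forall>w. det2 q w \<noteq> 0 \<longrightarrow>
              cmod (det2 q (dirderiv (G ^^ n) q w)) < cmod (l * det2 q w)))"

definition in_attr_basin :: "(complex^2 \<Rightarrow> complex^2) \<Rightarrow> complex^2 \<Rightarrow> nat \<Rightarrow> complex^2 \<Rightarrow> bool" where
  "in_attr_basin G q n z \<longleftrightarrow> attracting_periodic G q n \<and>
     (\<lambda>k. pdist ((G ^^ (k * n)) z) q) \<longlonglongrightarrow> 0"

definition hyperbolic :: "(complex^2 \<Rightarrow> complex^2) \<Rightarrow> bool" where
  "hyperbolic G \<longleftrightarrow> (\<forall>c. critical_pt G c \<longrightarrow> (\<exists>q n. in_attr_basin G q n c))"

end

theory Submission
  imports Defs "HOL-Computational_Algebra.Polynomial" "HOL-Computational_Algebra.Fundamental_Theorem_Algebra"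
begin

definition isform :: "nat \<Rightarrow> (complex^2 \<Rightarrow> complex) \<Rightarrow> bool" where
  "isform d f \<longleftrightarrow> (\<exists>A. \<forall>v. f v = hpoly2 d A v)"

lemma isform_const: "isform 0 (\<lambda>v. c)"
  unfolding isform_def hpoly2_def by (rule exI[of _ "\<lambda>_. c"]) simp

lemma isform_zero: "isform d (\<lambda>v. 0)"
  unfolding isform_def hpoly2_def by (rule exI[of _ "\<lambda>_. 0"]) simp

lemma isform_add: "isform d f \<Longrightarrow> isform d g \<Longrightarrow> isform d (\<lambda>v. f v + g v)"
  unfolding isform_def hpoly2_def
  apply (elim exE)
  subgoal for A B by (rule exI[of _ "\<lambda>i. A i + B i"]) (simp add: sum.distrib algebra_simps)
  done

lemma isform_cmult: "isform d f \<Longrightarrow> isform d (\<lambda>v. c * f v)"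
  unfolding isform_def hpoly2_def
  apply (elim exE)
  subgoal for A by (rule exI[of _ "\<lambda>i. c * A i"]) (simp add: sum_distrib_left algebra_simps)
  done

lemma isform_sum: "finite S \<Longrightarrow> (\<And>i. i \<in> S \<Longrightarrow> isform d (f i)) \<Longrightarrow> isform d (\<lambda>v. \<Sum>i\<in>S. f i v)"
  by (induction S rule: finite_induct) (auto intro: isform_add isform_zero)

lemma isform_mult1: "isform d f \<Longrightarrow> isform (Suc d) (\<lambda>v. v$1 * f v)"
  unfolding isform_def
proof (elim exE)
  fix A assume A: "\<forall>v. f v = hpoly2 d A v"
  define B where "B = (\<lambda>i. if i = 0 then 0 else A (i - 1))"
  have "\<forall>v. v$1 * f v = hpoly2 (Suc d) B v"
  proof
    fix v :: "complex^2"
    have "hpoly2 (Suc d) B v = (\<Sum>i\<le>d. B (Suc i) * v$1 ^ Suc i * v$2 ^ (Suc d - Suc i))"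
      unfolding hpoly2_def by (subst sum.atMost_Suc_shift) (simp add: B_def)
    also have "\<dots> = v$1 * hpoly2 d A v"
      unfolding hpoly2_def B_def by (simp add: sum_distrib_left algebra_simps)
    finally show "v$1 * f v = hpoly2 (Suc d) B v" using A by simp
  qed
  then show "\<exists>A. \<forall>v. v$1 * f v = hpoly2 (Suc d) A v" by blast
qed

lemma isform_mult2: "isform d f \<Longrightarrow> isform (Suc d) (\<lambda>v. v$2 * f v)"
  unfolding isform_def hpoly2_def
  apply (elim exE)
  subgoal for A
    apply (rule exI[of _ "\<lambda>i. if i \<le> d then A i else 0"])
    apply (simp add: sum_distrib_left algebra_simps)
    apply (intro allI sum.cong refl)
    apply (simp add: Suc_diff_le)
    done
  done

lemma isform_multlin: "isform d f \<Longrightarrow> isform (Suc d) (\<lambda>v. (\<alpha> * v$1 + \<beta> * v$2) * f v)"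
proof -
  assume f: "isform d f"
  have "isform (Suc d) (\<lambda>v. \<alpha> * (v$1 * f v) + \<beta> * (v$2 * f v))"
    by (intro isform_add isform_cmult isform_mult1 isform_mult2 f)
  then show ?thesis by (simp add: algebra_simps)
qed

lemma isform_powlin: "isform m f \<Longrightarrow> isform (k + m) (\<lambda>v. (\<alpha> * v$1 + \<beta> * v$2) ^ k * f v)"
proof (induction k)
  case 0 then show ?case by simp
next
  case (Suc k)
  from isform_multlin[OF Suc.IH[OF Suc.prems], of \<alpha> \<beta>]
  show ?case by (simp add: algebra_simps)
qed

lemma hpoly2_homog: "hpoly2 d A (c *s v) = c ^ d * hpoly2 d A v"
  unfolding hpoly2_def sum_distrib_left
proof (rule sum.cong[OF refl])
  fix i assume "i \<in> {..d}"
  then have "c ^ i * c ^ (d - i) = c ^ d" by (simp flip: power_add)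
  then show "A i * ((c *s v) $ 1) ^ i * ((c *s v) $ 2) ^ (d - i) = c ^ d * (A i * v $ 1 ^ i * v $ 2 ^ (d - i))"
    by (simp add: power_mult_distrib algebra_simps)
qed

lemma hpoly3_homog: "hpoly3 d A (c *s v) = c ^ d * hpoly3 d A v"
  unfolding hpoly3_def sum_distrib_left
proof (intro sum.cong[OF refl])
  fix i j assume "i \<in> {..d}" "j \<in> {..d - i}"
  then have e: "c ^ i * c ^ j * c ^ (d - i - j) = c ^ d" by (simp flip: power_add)
  have "A i j * ((c *s v) $ 1) ^ i * ((c *s v) $ 2) ^ j * ((c *s v) $ 3) ^ (d - i - j)
     = (c ^ i * c ^ j * c ^ (d - i - j)) * (A i j * v $ 1 ^ i * v $ 2 ^ j * v $ 3 ^ (d - i - j))"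
    by (simp add: power_mult_distrib algebra_simps)
  then show "A i j * ((c *s v) $ 1) ^ i * ((c *s v) $ 2) ^ j * ((c *s v) $ 3) ^ (d - i - j) =
         c ^ d * (A i j * v $ 1 ^ i * v $ 2 ^ j * v $ 3 ^ (d - i - j))" by (simp only: e)
qed

lemma isform_deg_eq: "isform m f \<Longrightarrow> m = m' \<Longrightarrow> isform m' f" by simp

lemma hpoly3_lin:
  assumes L: "\<And>v k. (L v :: complex^3) $ k = \<alpha> k * v$1 + \<beta> k * v$2"
  shows "isform d (\<lambda>v. hpoly3 d c (L v))"
  unfolding hpoly3_def
proof (intro isform_sum finite_atMost)
  fix i j assume i: "i \<in> {..d}" and j: "j \<in> {..d - i}"
  have "isform (i + (j + ((d - i - j) + 0)))
     (\<lambda>v. (\<alpha> 1 * v$1 + \<beta> 1 * v$2) ^ i * ((\<alpha> 2 * v$1 + \<beta> 2 * v$2) ^ j *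
           ((\<alpha> 3 * v$1 + \<beta> 3 * v$2) ^ (d - i - j) * c i j)))"
    by (intro isform_powlin isform_const)
  moreover have "i + (j + ((d - i - j) + 0)) = d" using i j by auto
  ultimately show "isform d (\<lambda>v. c i j * L v $ 1 ^ i * L v $ 2 ^ j * L v $ 3 ^ (d - i - j))"
    by (simp add: L algebra_simps)
qed

lemma hpoly2_lin:
  assumes L: "\<And>v k. (L v :: complex^2) $ k = \<alpha> k * v$1 + \<beta> k * v$2"
  shows "isform d (\<lambda>v. hpoly2 d c (L v))"
  unfolding hpoly2_def
proof (intro isform_sum finite_atMost)
  fix i assume i: "i \<in> {..d}"
  have "isform (i + ((d - i) + 0))
     (\<lambda>v. (\<alpha> 1 * v$1 + \<beta> 1 * v$2) ^ i * ((\<alpha> 2 * v$1 + \<beta> 2 * v$2) ^ (d - i) * c i))"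
    by (intro isform_powlin isform_const)
  moreover have "i + ((d - i) + 0) = d" using i by auto
  ultimately show "isform d (\<lambda>v. c i * L v $ 1 ^ i * L v $ 2 ^ (d - i))"
    by (simp add: L algebra_simps)
qed

lemma isform_comp_lin:
  assumes f: "isform d f" and L: "\<And>v k. (L v :: complex^2) $ k = \<alpha> k * v$1 + \<beta> k * v$2"
  shows "isform d (\<lambda>v. f (L v))"
proof -
  from f obtain A where A: "\<And>v. f v = hpoly2 d A v" unfolding isform_def by blast
  show ?thesis unfolding A by (rule hpoly2_lin[OF L])
qed

lemma isform_homog: "isform d f \<Longrightarrow> f (c *s v) = c ^ d * f v"
  unfolding isform_def by (auto simp: hpoly2_homog)

lemma isform_DERIV:
  assumes "isform d f"
  shows "(\<lambda>t. f (p + t *s w)) field_differentiable (at t)"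
proof -
  from assms obtain A where A: "\<And>v. f v = hpoly2 d A v" unfolding isform_def by blast
  have "(\<lambda>t. (\<Sum>i\<le>d. A i * (p$1 + t * w$1) ^ i * (p$2 + t * w$2) ^ (d - i))) field_differentiable (at t)"
    unfolding field_differentiable_def
    by (rule exI, intro derivative_eq_intros) auto
  then show ?thesis by (simp add: A hpoly2_def)
qed

definition det22 :: "complex^2^2 \<Rightarrow> complex" where
  "det22 A = A$1$1 * A$2$2 - A$1$2 * A$2$1"

definition inv22 :: "complex^2^2 \<Rightarrow> complex^2^2" where
  "inv22 A = (\<chi> i j. (if i = 1 then (if j = 1 then A$2$2 else - A$1$2)
                          else (if j = 1 then - A$2$1 else A$1$1)) / det22 A)"

lemma mv2: "((A::complex^2^2) *v (x::complex^2)) $ 1 = A$1$1 * x$1 + A$1$2 * x$2"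
           "((A::complex^2^2) *v (x::complex^2)) $ 2 = A$2$1 * x$1 + A$2$2 * x$2"
  by (simp_all add: matrix_vector_mult_def sum_2)

lemma det2_mv: "det2 (A *v x) (A *v y) = det22 A * det2 x y"
  unfolding det2_def det22_def mv2 by (simp add: algebra_simps)

lemma inv22_mv: "(inv22 A *v y) $ 1 = (A$2$2 * y$1 - A$1$2 * y$2) / det22 A"
   "(inv22 A *v y) $ 2 = (A$1$1 * y$2 - A$2$1 * y$1) / det22 A"
  unfolding mv2 inv22_def by (simp_all add: add_divide_distrib diff_divide_distrib)

lemma inv22_1: "det22 A \<noteq> 0 \<Longrightarrow> inv22 A *v (A *v x) = x"
proof -
  assume d: "det22 A \<noteq> 0"
  have "A$2$2 * (A *v x)$1 - A$1$2 * (A *v x)$2 = det22 A * x$1"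
       "A$1$1 * (A *v x)$2 - A$2$1 * (A *v x)$1 = det22 A * x$2"
    unfolding mv2 det22_def by (simp_all add: algebra_simps)
  then show ?thesis unfolding vec_eq_iff forall_2 inv22_mv using d by simp
qed

lemma inv22_2: "det22 A \<noteq> 0 \<Longrightarrow> A *v (inv22 A *v x) = x"
proof -
  assume d: "det22 A \<noteq> 0"
  have "A$1$1 * (A$2$2 * x$1 - A$1$2 * x$2) + A$1$2 * (A$1$1 * x$2 - A$2$1 * x$1) = det22 A * x$1"
       "A$2$1 * (A$2$2 * x$1 - A$1$2 * x$2) + A$2$2 * (A$1$1 * x$2 - A$2$1 * x$1) = det22 A * x$2"
    unfolding det22_def by (simp_all add: algebra_simps)
  then have "A$1$1 * ((A$2$2 * x$1 - A$1$2 * x$2)/det22 A) + A$1$2 * ((A$1$1 * x$2 - A$2$1 * x$1)/det22 A) = x$1"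
       "A$2$1 * ((A$2$2 * x$1 - A$1$2 * x$2)/det22 A) + A$2$2 * ((A$1$1 * x$2 - A$2$1 * x$1)/det22 A) = x$2"
    using d by (simp_all add: times_divide_eq_right add_divide_distrib[symmetric])
  then show ?thesis unfolding vec_eq_iff forall_2 mv2[of A] inv22_mv by simp
qed

lemma det22_inv: "det22 A \<noteq> 0 \<Longrightarrow> det22 (inv22 A) \<noteq> 0"
proof
  assume d: "det22 A \<noteq> 0" and "det22 (inv22 A) = 0"
  moreover have "det2 (A *v (inv22 A *v vector[1,0])) (A *v (inv22 A *v vector[0,1])) = 1"
    using inv22_2[OF d] by (simp add: det2_def)
  ultimately show False unfolding det2_mv by (simp add: det2_def)
qed

lemma mv_zero_iff: "det22 A \<noteq> 0 \<Longrightarrow> (A *v x = 0) \<longleftrightarrow> x = 0"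
  by (metis inv22_1 matrix_vector_mult_0_right)

lemma mv_scale: "(A::complex^2^2) *v (c *s x) = c *s (A *v (x::complex^2))"
  by (simp add: vec_eq_iff forall_2 mv2 algebra_simps)

lemma mv_add: "(A::complex^2^2) *v (x + y) = A *v x + A *v (y::complex^2)"
  by (simp add: vec_eq_iff forall_2 mv2 algebra_simps)

lemma norm2_le: "norm (x::complex^2) \<le> norm (x$1) + norm (x$2)"
proof -
  have "norm x = L2_set (\<lambda>i. norm (x$i)) UNIV" by (simp add: norm_vec_def)
  also have "\<dots> \<le> (\<Sum>i\<in>UNIV. norm (x$i))" by (rule L2_set_le_sum) auto
  finally show ?thesis by (simp add: sum_2)
qed

lemma mv_norm_bound: "norm ((A::complex^2^2) *v (x::complex^2)) \<le> (norm (A$1$1) + norm (A$1$2) + norm (A$2$1) + norm (A$2$2)) * norm x"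
proof -
  have n1: "norm (x$1) \<le> norm x" "norm (x$2) \<le> norm x" by (rule Finite_Cartesian_Product.norm_nth_le)+
  have "norm (A *v x) \<le> norm ((A *v x)$1) + norm ((A *v x)$2)" by (rule norm2_le)
  also have "\<dots> \<le> (norm (A$1$1) * norm (x$1) + norm (A$1$2) * norm (x$2)) + (norm (A$2$1) * norm (x$1) + norm (A$2$2) * norm (x$2))"
    unfolding mv2 by (intro add_mono norm_triangle_le) (auto simp: norm_mult)
  also have "\<dots> \<le> (norm (A$1$1) * norm x + norm (A$1$2) * norm x) + (norm (A$2$1) * norm x + norm (A$2$2) * norm x)"
    by (intro add_mono mult_left_mono n1) auto
  finally show ?thesis by (simp add: algebra_simps)
qed

lemma pdist_scale1: "c \<noteq> 0 \<Longrightarrow> pdist (c *s x) y = pdist x y"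
proof -
  assume c: "c \<noteq> 0"
  have "det2 (c *s x) y = c * det2 x y" unfolding det2_def by (simp add: algebra_simps)
  moreover have "norm (c *s x) = norm c * norm x"
    unfolding norm_vec_def by (simp add: L2_set_right_distrib norm_mult)
  ultimately show ?thesis unfolding pdist_def using c by (simp add: norm_mult)
qed

lemma pdist_nonneg: "pdist x y \<ge> 0" unfolding pdist_def by simp

lemma pdist_mv_bound:
  assumes "det22 A \<noteq> 0"
  shows "\<exists>K. \<forall>x y. pdist (A *v x) (A *v y) \<le> K * pdist x y"
proof -
  let ?B = "inv22 A"
  define N where "N = norm (?B$1$1) + norm (?B$1$2) + norm (?B$2$1) + norm (?B$2$2)"
  have N: "norm x \<le> N * norm (A *v x)" for x
    using mv_norm_bound[of ?B "A *v x"] inv22_1[OF assms] by (simp add: N_def)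
  have N0: "N \<ge> 0" unfolding N_def by simp
  show ?thesis
  proof (intro exI allI)
    fix x y
    show "pdist (A *v x) (A *v y) \<le> (norm (det22 A) * N^2) * pdist x y"
    proof (cases "x = 0 \<or> y = 0")
      case True then show ?thesis by (auto simp: pdist_def det2_def)
    next
      case False
      then have nx: "norm x > 0" "norm y > 0" by auto
      have ax: "A *v x \<noteq> 0" "A *v y \<noteq> 0" using False mv_zero_iff[OF assms] by auto
      then have nax: "norm (A *v x) > 0" "norm (A *v y) > 0" by auto
      have "pdist (A *v x) (A *v y) = norm (det22 A) * norm (det2 x y) / (norm (A *v x) * norm (A *v y))"
        unfolding pdist_def det2_mv by (simp add: norm_mult)
      also have "\<dots> \<le> norm (det22 A) * norm (det2 x y) / ((norm x / N) * (norm y / N))"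
      proof (rule divide_left_mono)
        have N1: "N > 0" using N[of x] nx nax N0 by (metis antisym_conv1 mult_zero_left not_le)
        have "norm x / N \<le> norm (A *v x)" "norm y / N \<le> norm (A *v y)"
          using N[of x] N[of y] N1 by (auto simp: divide_le_eq mult.commute)
        then show "norm x / N * (norm y / N) \<le> norm (A *v x) * norm (A *v y)"
          by (intro mult_mono) (use N1 in auto)
        show "0 \<le> norm (det22 A) * norm (det2 x y)" by simp
        show "0 < norm (A *v x) * norm (A *v y) * (norm x / N * (norm y / N))"
          using nax nx N1 by simp
      qed
      also have "\<dots> = (norm (det22 A) * N^2) * pdist x y"
        unfolding pdist_def using nx by (simp add: field_simps power2_eq_square)
      finally show ?thesis .
    qed
  qed
qed

lemma mvk: "((A::complex^2^2) *v (x::complex^2)) $ k = A$k$1 * x$1 + A$k$2 * x$2"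
  by (simp add: matrix_vector_mult_def sum_2)

definition hyp1 :: "(complex^2 \<Rightarrow> complex^2) \<Rightarrow> bool" where
  "hyp1 H \<longleftrightarrow> (\<forall>c. critical_pt H c \<longrightarrow> (\<exists>q. in_attr_basin H q 1 c))"

lemma hyp1_imp: "hyp1 H \<Longrightarrow> hyperbolic H"
  unfolding hyp1_def hyperbolic_def by blast

definition forms :: "nat \<Rightarrow> (complex^2 \<Rightarrow> complex^2) \<Rightarrow> bool" where
  "forms d H \<longleftrightarrow> (\<forall>k. isform d (\<lambda>v. H v $ k))"

lemma forms_DERIV:
  assumes "forms d H"
  shows "((\<lambda>t. H (p + t *s w) $ k) has_field_derivative deriv (\<lambda>t. H (p + t *s w) $ k) t) (at t)"
  using assms isform_DERIV DERIV_deriv_iff_field_differentiable unfolding forms_def by blast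

lemma dirderiv_mv:
  assumes "forms d H"
  shows "dirderiv (\<lambda>v. (A::complex^2^2) *v H v) p w = A *v dirderiv H p w"
proof -
  have "deriv (\<lambda>t. (A *v H (p + t *s w)) $ k) 0 = (A *v dirderiv H p w) $ k" for k
  proof -
    have "((\<lambda>t. A$k$1 * H (p + t *s w) $ 1 + A$k$2 * H (p + t *s w) $ 2) has_field_derivative
       A$k$1 * deriv (\<lambda>t. H (p + t *s w) $ 1) 0 + A$k$2 * deriv (\<lambda>t. H (p + t *s w) $ 2) 0) (at 0)"
      by (intro derivative_intros DERIV_cmult forms_DERIV[OF assms])
    then show ?thesis unfolding mvk dirderiv_def by (simp add: DERIV_imp_deriv)
  qed
  then show ?thesis unfolding dirderiv_def vec_eq_iff by simp
qed

lemma dirderiv_comp: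
  "dirderiv (\<lambda>v. H ((C::complex^2^2) *v v)) p w = dirderiv H (C *v p) (C *v w)"
  unfolding dirderiv_def by (simp add: mv_add mv_scale)

lemma forms_comp: "forms d H \<Longrightarrow> forms d (\<lambda>v. H ((C::complex^2^2) *v v))"
  unfolding forms_def by (auto intro!: isform_comp_lin[where L="\<lambda>v. C *v v"] simp: mvk)

lemma forms_mv: "forms d H \<Longrightarrow> forms d (\<lambda>v. (A::complex^2^2) *v H v)"
  unfolding forms_def mvk by (auto intro!: isform_add isform_cmult)

lemma funpow_conj:
  assumes dC: "det22 C \<noteq> 0" and G: "\<And>v. G v = inv22 C *v H (C *v v)"
  shows "(G ^^ k) v = inv22 C *v (H ^^ k) (C *v v)"
proof (induction k)
  case 0 then show ?case using inv22_1[OF dC] by simp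
next
  case (Suc k) then show ?case by (simp add: G inv22_2[OF dC])
qed

lemma hyp1_conj:
  assumes dC: "det22 C \<noteq> 0" and Hf: "forms d H"
    and G: "\<And>v. G v = inv22 C *v H (C *v v)" and hyp: "hyp1 H"
  shows "hyp1 G"
  unfolding hyp1_def
proof (intro allI impI)
  fix c assume cc: "critical_pt G c"
  let ?B = "inv22 C"
  have dB: "det22 ?B \<noteq> 0" using det22_inv[OF dC] .
  have Geq: "G = (\<lambda>v. ?B *v (\<lambda>v. H (C *v v)) v)" using G by auto
  have DG: "dirderiv G p w = ?B *v dirderiv H (C *v p) (C *v w)" for p w
    unfolding Geq dirderiv_mv[OF forms_comp[OF Hf]] dirderiv_comp ..
  have c0: "c \<noteq> 0" using cc unfolding critical_pt_def by simp
  have "critical_pt H (C *v c)"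
    unfolding critical_pt_def
  proof (intro conjI allI)
    show "C *v c \<noteq> 0" using c0 mv_zero_iff[OF dC] by simp
    fix w
    have "det2 (G c) (dirderiv G c (?B *v w)) = 0" using cc unfolding critical_pt_def by simp
    then show "det2 (H (C *v c)) (dirderiv H (C *v c) w) = 0"
      unfolding G DG det2_mv inv22_2[OF dC] using dB by simp
  qed
  then obtain q' where q': "in_attr_basin H q' 1 (C *v c)" using hyp unfolding hyp1_def by blast
  then obtain l where q'0: "q' \<noteq> 0" and Hq: "H q' = l *s q'"
    and mult: "\<And>w. det2 q' w \<noteq> 0 \<Longrightarrow> cmod (det2 q' (dirderiv H q' w)) < cmod (l * det2 q' w)"
    and conv: "(\<lambda>k. pdist ((H ^^ k) (C *v c)) q') \<longlonglongrightarrow> 0"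
    unfolding in_attr_basin_def attracting_periodic_def by auto
  define q where "q = ?B *v q'"
  have Cq: "C *v q = q'" unfolding q_def using inv22_2[OF dC] .
  have "attracting_periodic G q 1"
    unfolding attracting_periodic_def
  proof (intro conjI exI allI impI)
    show "q \<noteq> 0" using q'0 Cq by auto
    show "1 \<le> (1::nat)" by simp
    show "(G ^^ 1) q = l *s q" using Cq by (simp add: G Hq mv_scale q_def)
    fix w assume w: "det2 q w \<noteq> 0"
    have e1: "det2 q w = det22 ?B * det2 q' (C *v w)"
      using det2_mv[of ?B q' "C *v w"] unfolding q_def inv22_1[OF dC] by simp
    have e2: "det2 q (dirderiv (G ^^ 1) q w) = det22 ?B * det2 q' (dirderiv H q' (C *v w))"
      using det2_mv[of ?B q'] Cq by (simp add: DG q_def)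
    have "det2 q' (C *v w) \<noteq> 0" using w e1 by auto
    from mult[OF this] show "cmod (det2 q (dirderiv (G ^^ 1) q w)) < cmod (l * det2 q w)"
      unfolding e1 e2 using dB by (simp add: norm_mult)
  qed
  moreover have "(\<lambda>k. pdist ((G ^^ (k * 1)) c) q) \<longlonglongrightarrow> 0"
  proof -
    obtain K where K: "\<And>x y. pdist (?B *v x) (?B *v y) \<le> K * pdist x y"
      using pdist_mv_bound[OF dB] by blast
    have lim: "(\<lambda>k. K * pdist ((H ^^ k) (C *v c)) q') \<longlonglongrightarrow> K * 0"
      by (intro tendsto_intros conv)
    have le: "pdist ((G ^^ (k * 1)) c) q \<le> K * pdist ((H ^^ k) (C *v c)) q'" for k
    proof -
      have "(G ^^ k) c = ?B *v (H ^^ k) (C *v c)" by (rule funpow_conj[OF dC]) (rule G)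
      then show ?thesis using K[of "(H ^^ k) (C *v c)" q'] unfolding q_def by simp
    qed
    show ?thesis
    proof (rule tendsto_sandwich[of "\<lambda>_. 0" _ _ "\<lambda>k. K * pdist ((H ^^ k) (C *v c)) q'"])
      show "\<forall>\<^sub>F n in sequentially. 0 \<le> pdist ((G ^^ (n * 1)) c) q" by (simp add: pdist_nonneg)
      show "\<forall>\<^sub>F n in sequentially. pdist ((G ^^ (n * 1)) c) q \<le> K * pdist ((H ^^ n) (C *v c)) q'"
        using le by simp
      show "((\<lambda>_. 0::real) \<longlongrightarrow> 0) sequentially" by simp
      show "(\<lambda>k. K * pdist ((H ^^ k) (C *v c)) q') \<longlonglongrightarrow> 0" using lim by simp
    qed
  qed
  ultimately show "\<exists>q. in_attr_basin G q 1 c" unfolding in_attr_basin_def by blast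
qed

lemma isform_poly:
  assumes "isform d f"
  shows "\<exists>p. (\<forall>z. poly p z = f (vector [1, z])) \<and> f (vector [0, 1]) = coeff p d \<and> degree p \<le> d"
proof -
  from assms obtain A where A: "\<And>v. f v = hpoly2 d A v" unfolding isform_def by blast
  define p where "p = (\<Sum>i\<le>d. monom (A i) (d - i))"
  have "poly p z = f (vector [1, z])" for z
    unfolding p_def A hpoly2_def by (simp add: poly_sum poly_monom)
  moreover have "coeff p d = f (vector [0, 1])"
  proof -
    have "coeff p d = (\<Sum>i\<le>d. if i = 0 then A i else 0)"
      unfolding p_def coeff_sum coeff_monom by (intro sum.cong refl) auto
    also have "\<dots> = A 0" by (simp add: sum.delta)
    also have "\<dots> = f (vector [0, 1])"
      unfolding A hpoly2_def by (simp add: power_0_left sum.atMost_shift)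
    finally show ?thesis .
  qed
  moreover have "degree p \<le> d"
    unfolding p_def by (intro degree_sum_le) (auto intro: order.trans[OF degree_monom_le])
  ultimately show ?thesis by (intro exI[of _ p]) auto
qed

lemma poly_root_exists: "degree (p::complex poly) \<noteq> 0 \<Longrightarrow> \<exists>z. poly p z = 0"
  by (metis constant_degree fundamental_theorem_of_algebra)

lemma wronsk_nonzero:
  fixes p1 p2 :: "complex poly"
  assumes d1: "d \<ge> 1" and deg1: "degree p1 \<le> d" and deg2: "degree p2 \<le> d"
    and nocom: "\<And>z. \<not> (poly p1 z = 0 \<and> poly p2 z = 0)"
    and noinf: "\<not> (coeff p1 d = 0 \<and> coeff p2 d = 0)"
  shows "p1 * pderiv p2 - p2 * pderiv p1 \<noteq> 0"
proof
  assume W: "p1 * pderiv p2 - p2 * pderiv p1 = 0"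
  then have W': "p1 * pderiv p2 = p2 * pderiv p1" by simp
  show False
  proof (cases "p1 = 0")
    case True
    then have "coeff p2 d \<noteq> 0" using noinf by simp
    then have "degree p2 = d" using deg2 le_degree le_antisym by blast
    then have "degree p2 \<noteq> 0" using d1 by simp
    then obtain z where "poly p2 z = 0" using poly_root_exists by blast
    then show False using nocom True by simp
  next
    case p1: False
    show False
    proof (cases "degree p1 = 0")
      case True
      then have "pderiv p1 = 0" using pderiv_eq_0_iff by blast
      then have "pderiv p2 = 0" using W' p1 by simp
      then have "degree p2 = 0" using pderiv_eq_0_iff by blast
      then have "coeff p1 d = 0" "coeff p2 d = 0" using True d1 by (auto intro: coeff_eq_0)
      then show False using noinf by simp
    next
      case False
      then obtain z where z: "poly p1 z = 0" using poly_root_exists by auto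
      then have p2z: "poly p2 z \<noteq> 0" using nocom by auto
      then have p2: "p2 \<noteq> 0" by auto
      have dp1: "pderiv p1 \<noteq> 0" using False by (simp add: pderiv_eq_0_iff)
      have dp2: "pderiv p2 \<noteq> 0"
      proof
        assume "pderiv p2 = 0"
        then have "p2 * pderiv p1 = 0" using W' by simp
        then show False using p2 dp1 by simp
      qed
      have o1: "order z p1 = Suc (order z (pderiv p1))" using order_pderiv[OF p1 z] .
      have "order z (p1 * pderiv p2) = order z p1 + order z (pderiv p2)"
        using p1 dp2 by (intro order_mult) simp
      moreover have "order z (p2 * pderiv p1) = order z p2 + order z (pderiv p1)"
        using p2 dp1 by (intro order_mult) simp
      moreover have "order z p2 = 0" using order_0I[OF p2z] .
      ultimately show False using W' o1 by simp
    qed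
  qed
qed

lemma vec2_eq: "(v::complex^2) = vector [v$1, v$2]"
  by (simp add: vec_eq_iff forall_2)

lemma forms_homog: "forms d H \<Longrightarrow> H (c *s v) = c ^ d *s H v"
  unfolding forms_def vec_eq_iff by (auto intro: isform_homog[where f="\<lambda>v. H v $ _", simplified])

lemma crit_mv:
  assumes "forms d g" "det22 A \<noteq> 0" "critical_pt (\<lambda>v. A *v g v) c"
  shows "critical_pt g c"
  using assms unfolding critical_pt_def dirderiv_mv[OF assms(1)] det2_mv by simp

lemma crit_W:
  assumes gf: "forms d g" and d1: "d \<ge> 1"
    and p1: "\<And>z. poly p1 z = g (vector [1, z]) $ 1" and p2: "\<And>z. poly p2 z = g (vector [1, z]) $ 2"
    and cc: "critical_pt g c" and a: "c$1 \<noteq> 0"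
  shows "poly (p1 * pderiv p2 - p2 * pderiv p1) (c$2 / c$1) = 0"
proof -
  let ?a = "c$1" and ?z = "c$2 / c$1"
  define w :: "complex^2" where "w = vector [0, 1]"
  have ceq: "c + t *s w = ?a *s vector [1, (c$2 + t) / ?a]" for t
    using a by (simp add: vec_eq_iff forall_2 w_def)
  have gk: "g (c + t *s w) $ k = ?a ^ d * g (vector [1, (c$2 + t) / ?a]) $ k" for t k
    unfolding ceq forms_homog[OF gf] by simp
  have der: "deriv (\<lambda>t. g (c + t *s w) $ k) 0 = ?a ^ d * poly (pderiv p) ?z * (1 / ?a)"
    if pk: "\<And>z. poly p z = g (vector [1, z]) $ k" for p k
  proof -
    have "((\<lambda>t. (c$2 + t) / ?a) has_field_derivative 1 / ?a) (at 0)"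
      using a by (auto intro!: derivative_eq_intros)
    from DERIV_chain2[OF poly_DERIV[of p] this]
    have "((\<lambda>t. ?a ^ d * poly p ((c$2 + t) / ?a)) has_field_derivative ?a ^ d * (poly (pderiv p) ?z * (1 / ?a))) (at 0)"
      by (intro DERIV_cmult) simp
    then show ?thesis unfolding gk pk[symmetric] by (simp add: DERIV_imp_deriv)
  qed
  have gc: "g c $ k = ?a ^ d * poly p ?z" if pk: "\<And>z. poly p z = g (vector [1, z]) $ k" for p k
    using gk[of 0 k] pk by (simp add: w_def)
  have "det2 (g c) (dirderiv g c w) = 0" using cc unfolding critical_pt_def by simp
  then have "(?a ^ d * poly p1 ?z) * (?a ^ d * poly (pderiv p2) ?z * (1 / ?a))
           - (?a ^ d * poly p2 ?z) * (?a ^ d * poly (pderiv p1) ?z * (1 / ?a)) = 0"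
    unfolding det2_def dirderiv_def using gc[OF p1] gc[OF p2] der[OF p1] der[OF p2] by simp
  then have "(?a ^ d * ?a ^ d * (1 / ?a)) * (poly p1 ?z * poly (pderiv p2) ?z - poly p2 ?z * poly (pderiv p1) ?z) = 0"
    by (simp add: algebra_simps)
  moreover have "?a ^ d * ?a ^ d * (1 / ?a) \<noteq> 0" using a by simp
  ultimately show ?thesis by simp
qed

lemma pdist_affine: "pdist (vector [1, a]) (vector [1, b]) \<le> cmod (a - b)"
proof -
  have n1: "norm (vector [1, a] :: complex^2) \<ge> 1" "norm (vector [1, b] :: complex^2) \<ge> 1"
    using Finite_Cartesian_Product.norm_nth_le[of "vector [1, a] :: complex^2" 1]
          Finite_Cartesian_Product.norm_nth_le[of "vector [1, b] :: complex^2" 1] by auto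
  have "pdist (vector [1, a]) (vector [1, b]) = cmod (b - a) / (norm (vector [1, a] :: complex^2) * norm (vector [1, b] :: complex^2))"
    unfolding pdist_def det2_def by simp
  also have "\<dots> \<le> cmod (b - a) / 1"
  proof (rule divide_left_mono)
    show "1 \<le> norm (vector [1, a] :: complex^2) * norm (vector [1, b] :: complex^2)"
      using mult_mono[OF n1] by simp
    then show "0 < norm (vector [1, a] :: complex^2) * norm (vector [1, b] :: complex^2) * 1" by simp
  qed simp
  finally show ?thesis by (simp add: norm_minus_commute)
qed

lemma mult_lemma:
  assumes Hf: "forms d H"
    and HPQ: "\<And>z. H (vector [1, z]) = vector [poly P z, poly Q z]"
    and fixQ: "poly Q zs = zs * poly P zs"
  shows "det2 (vector [1, zs]) (dirderiv H (vector [1, zs]) w)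
         = (poly (pderiv Q) zs - zs * poly (pderiv P) zs) * det2 (vector [1, zs]) w"
proof -
  define q :: "complex^2" where "q = vector [1, zs]"
  define f where "f t = H (q + t *s w) $ 2 - zs * H (q + t *s w) $ 1" for t
  have "(f has_field_derivative deriv (\<lambda>t. H (q + t *s w) $ 2) 0 - zs * deriv (\<lambda>t. H (q + t *s w) $ 1) 0) (at 0)"
    unfolding f_def by (intro DERIV_diff DERIV_cmult forms_DERIV[OF Hf])
  then have lhs: "det2 q (dirderiv H q w) = deriv f 0"
    by (simp add: DERIV_imp_deriv det2_def dirderiv_def q_def)
  define \<sigma> where "\<sigma> t = (zs + t * w$2) / (1 + t * w$1)" for t
  define h where "h t = (1 + t * w$1) ^ d * (poly Q (\<sigma> t) - zs * poly P (\<sigma> t))" for t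
  define S where "S = {t. 1 + t * w$1 \<noteq> 0}"
  have S: "open S" "0 \<in> S" unfolding S_def
    by (auto intro!: open_Collect_neq continuous_intros)
  have fh: "f t = h t" if "t \<in> S" for t
  proof -
    have "(1 + t * w$1) * \<sigma> t = zs + t * w$2" using that unfolding S_def \<sigma>_def by simp
    then have e: "q + t *s w = (1 + t * w$1) *s vector [1, \<sigma> t]"
      unfolding q_def by (simp add: vec_eq_iff forall_2 algebra_simps)
    have "H (q + t *s w) = (1 + t * w$1) ^ d *s vector [poly P (\<sigma> t), poly Q (\<sigma> t)]"
      by (simp only: e forms_homog[OF Hf] HPQ)
    then show ?thesis unfolding f_def h_def by (simp add: algebra_simps)
  qed
  have ds: "(\<sigma> has_field_derivative (w$2 - zs * w$1)) (at 0)"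
    unfolding \<sigma>_def by (auto intro!: derivative_eq_intros)
  have s0: "\<sigma> 0 = zs" unfolding \<sigma>_def by simp
  have dQ: "((\<lambda>t. poly Q (\<sigma> t)) has_field_derivative poly (pderiv Q) zs * (w$2 - zs * w$1)) (at 0)"
    using DERIV_chain2[OF poly_DERIV[of Q] ds] s0 by simp
  have dP: "((\<lambda>t. poly P (\<sigma> t)) has_field_derivative poly (pderiv P) zs * (w$2 - zs * w$1)) (at 0)"
    using DERIV_chain2[OF poly_DERIV[of P] ds] s0 by simp
  have dpow: "((\<lambda>t. (1 + t * w$1) ^ d) has_field_derivative of_nat d * (1 + 0 * w$1) ^ (d - 1) * w$1) (at 0)"
    by (auto intro!: derivative_eq_intros)
  have dh2: "((\<lambda>t. poly Q (\<sigma> t) - zs * poly P (\<sigma> t)) has_field_derivative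
      poly (pderiv Q) zs * (w$2 - zs * w$1) - zs * (poly (pderiv P) zs * (w$2 - zs * w$1))) (at 0)"
    by (intro DERIV_diff dQ DERIV_cmult dP)
  have "(h has_field_derivative
      (of_nat d * (1 + 0 * w$1) ^ (d - 1) * w$1) * (poly Q (\<sigma> 0) - zs * poly P (\<sigma> 0))
      + (poly (pderiv Q) zs * (w$2 - zs * w$1) - zs * (poly (pderiv P) zs * (w$2 - zs * w$1))) * (1 + 0 * w$1) ^ d) (at 0)"
    unfolding h_def by (rule DERIV_mult[OF dpow dh2])
  then have "(h has_field_derivative (poly (pderiv Q) zs - zs * poly (pderiv P) zs) * (w$2 - zs * w$1)) (at 0)"
    using fixQ s0 by (simp add: algebra_simps)
  then have "(f has_field_derivative (poly (pderiv Q) zs - zs * poly (pderiv P) zs) * (w$2 - zs * w$1)) (at 0)"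
    by (rule has_field_derivative_transform_within_open[OF _ S]) (simp add: fh)
  then show ?thesis using lhs unfolding q_def by (simp add: DERIV_imp_deriv det2_def)
qed

lemma bound_on_cball:
  assumes "continuous_on (cball (0::complex) r) f"
  shows "\<exists>B>0. \<forall>z\<in>cball 0 r. norm (f z :: complex) \<le> B"
proof -
  have "bounded (f ` cball 0 r)"
    by (intro compact_imp_bounded compact_continuous_image assms compact_cball)
  then show ?thesis unfolding bounded_pos by auto
qed

lemma iter_homog:
  assumes "forms d H"
  shows "(H ^^ k) (m *s v) = (m ^ (d ^ k)) *s (H ^^ k) v"
proof (induction k)
  case 0 then show ?case by simp
next
  case (Suc k) then show ?case by (simp add: forms_homog[OF assms] power_mult[symmetric] mult.commute)
qed

lemma core:
  assumes gf: "forms d g" and d1: "d \<ge> 1" and nz: "\<And>v. v \<noteq> 0 \<Longrightarrow> g v \<noteq> 0"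
  shows "\<exists>A. det22 A \<noteq> 0 \<and> hyp1 (\<lambda>v. A *v g v)"
proof -
  have vnz: "vector [1, z] \<noteq> (0::complex^2)" for z
    by (metis vector_2(1) zero_index zero_neq_one)
  have vnz2: "vector [0, 1] \<noteq> (0::complex^2)"
    by (metis vector_2(2) zero_index zero_neq_one)
  obtain p1 where p1: "\<And>z. poly p1 z = g (vector [1, z]) $ 1" and p1i: "g (vector [0, 1]) $ 1 = coeff p1 d"
    and p1d: "degree p1 \<le> d"
    using isform_poly[of d "\<lambda>v. g v $ 1"] gf unfolding forms_def by blast
  obtain p2 where p2: "\<And>z. poly p2 z = g (vector [1, z]) $ 2" and p2i: "g (vector [0, 1]) $ 2 = coeff p2 d"
    and p2d: "degree p2 \<le> d"
    using isform_poly[of d "\<lambda>v. g v $ 2"] gf unfolding forms_def by blast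
  define W where "W = p1 * pderiv p2 - p2 * pderiv p1"
  have W0: "W \<noteq> 0" unfolding W_def
  proof (rule wronsk_nonzero[OF d1 p1d p2d])
    show "\<not> (poly p1 z = 0 \<and> poly p2 z = 0)" for z
    proof
      assume "poly p1 z = 0 \<and> poly p2 z = 0"
      then have "g (vector [1, z]) = 0" unfolding p1 p2 by (simp add: vec_eq_iff forall_2)
      then show False using nz vnz by blast
    qed
    show "\<not> (coeff p1 d = 0 \<and> coeff p2 d = 0)"
    proof
      assume "coeff p1 d = 0 \<and> coeff p2 d = 0"
      then have "g (vector [0, 1]) = 0" using p1i p2i by (simp add: vec_eq_iff forall_2)
      then show False using nz vnz2 by blast
    qed
  qed
  define X :: "(complex^2) set" where "X = insert (vector [0, 1]) ((\<lambda>z. vector [1, z]) ` {z. poly W z = 0})"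
  have finX: "finite X" unfolding X_def using poly_roots_finite[OF W0] by simp
  have X0: "x \<noteq> 0" if "x \<in> X" for x using that vnz vnz2 unfolding X_def by auto
  have Xcrit: "\<exists>m x. m \<noteq> 0 \<and> x \<in> X \<and> c = m *s x" if cc: "critical_pt g c" for c
  proof (cases "c$1 = 0")
    case True
    have c0: "c \<noteq> 0" using cc unfolding critical_pt_def by simp
    then have "c$2 \<noteq> 0" using True by (auto simp: vec_eq_iff forall_2)
    moreover have "c = c$2 *s vector [0, 1]" using True by (simp add: vec_eq_iff forall_2)
    ultimately show ?thesis by (intro exI[of _ "c$2"] exI[of _ "vector [0, 1]"]) (simp add: X_def)
  next
    case False
    have W: "poly W (c$2 / c$1) = 0" unfolding W_def by (rule crit_W[OF gf d1 p1 p2 cc False])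
    have "c = c$1 *s vector [1, c$2 / c$1]" using False by (simp add: vec_eq_iff forall_2)
    moreover have "vector [1, c$2 / c$1] \<in> X" unfolding X_def using W by (intro insertI2 imageI) simp
    ultimately show ?thesis using False by (intro exI[of _ "c$1"] exI[of _ "vector [1, c$2 / c$1]"]) simp
  qed
  define Y where "Y = g ` insert (vector [1, 0]) X"
  have finY: "finite Y" unfolding Y_def using finX by simp
  have Y0: "y \<noteq> 0" if "y \<in> Y" for y
  proof -
    from that obtain x where x: "x \<in> insert (vector [1, 0]) X" "y = g x" unfolding Y_def by blast
    then have "x \<noteq> 0" using X0 vnz by auto
    then show ?thesis using nz x(2) by simp
  qed
  obtain s where s: "\<And>y. y \<in> Y \<Longrightarrow> y$1 + s * y$2 \<noteq> 0"
  proof -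
    have "finite ((\<lambda>y. - (y$1) / (y$2)) ` Y)" using finY by simp
    then obtain s where sn: "s \<notin> (\<lambda>y. - (y$1) / (y$2)) ` Y"
      using ex_new_if_finite[OF infinite_UNIV_char_0] by blast
    have "y$1 + s * y$2 \<noteq> 0" if y: "y \<in> Y" for y
    proof (cases "y$2 = 0")
      case True
      then have "y$1 \<noteq> 0" using Y0[OF y] by (auto simp: vec_eq_iff forall_2)
      then show ?thesis using True by simp
    next
      case False
      show ?thesis
      proof
        assume "y$1 + s * y$2 = 0"
        then have "s = - (y$1) / (y$2)" using False by (simp add: field_simps add_eq_0_iff)
        then show False using sn y by blast
      qed
    qed
    then show ?thesis using that by blast
  qed
  define Dp where "Dp = p1 + smult s p2"
  have Dp: "poly Dp z = g (vector [1, z]) $ 1 + s * g (vector [1, z]) $ 2" for z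
    unfolding Dp_def by (simp add: p1 p2)
  have Dp0: "poly Dp 0 \<noteq> 0" unfolding Dp using s[of "g (vector [1, 0])"] unfolding Y_def by simp
  obtain r where r0: "r > 0" and rD: "\<And>z. z \<in> cball 0 r \<Longrightarrow> poly Dp z \<noteq> 0"
  proof -
    have "open {z. poly Dp z \<noteq> 0}"
      by (intro open_Collect_neq continuous_intros)
    then obtain e where e: "e > 0" "ball 0 e \<subseteq> {z. poly Dp z \<noteq> 0}"
      using Dp0 open_contains_ball_eq by blast
    show ?thesis
    proof (rule that[of "e / 2"])
      show "e / 2 > 0" using e by simp
      fix z :: complex assume "z \<in> cball 0 (e / 2)"
      then have "z \<in> ball 0 e" using e by auto
      then show "poly Dp z \<noteq> 0" using e by auto
    qed
  qed
  define R where "R z = poly p2 z / poly Dp z" for z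
  define R' where "R' z = (poly (pderiv p2) z * poly Dp z - poly p2 z * poly (pderiv Dp) z) / (poly Dp z * poly Dp z)" for z
  have dR: "(R has_field_derivative R' z) (at z)" if "poly Dp z \<noteq> 0" for z
    unfolding R_def R'_def by (rule DERIV_divide[OF poly_DERIV poly_DERIV that])
  obtain CR where CR: "CR > 0" "\<And>z. z \<in> cball 0 r \<Longrightarrow> norm (R z) \<le> CR"
  proof -
    have "continuous_on (cball 0 r) R"
      unfolding R_def using rD by (intro continuous_intros) auto
    then show ?thesis using bound_on_cball that by blast
  qed
  obtain CR' where CR': "CR' > 0" "\<And>z. z \<in> cball 0 r \<Longrightarrow> norm (R' z) \<le> CR'"
  proof -
    have "continuous_on (cball 0 r) R'"
      unfolding R'_def using rD by (intro continuous_intros) auto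
    then show ?thesis using bound_on_cball that by blast
  qed
  define CX where "CX = (\<Sum>x\<in>X. cmod (g x $ 2) / cmod (g x $ 1 + s * g x $ 2))"
  have CX: "cmod (g x $ 2) / cmod (g x $ 1 + s * g x $ 2) \<le> CX" if "x \<in> X" for x
    unfolding CX_def by (rule member_le_sum[OF that _ finX]) simp
  have CX0: "CX \<ge> 0" unfolding CX_def by (intro sum_nonneg) simp
  define \<epsilon> where "\<epsilon> = min (r / (CR + CX + 1)) (1 / (2 * CR' + 2))"
  have \<epsilon>0: "\<epsilon> > 0" unfolding \<epsilon>_def using r0 CR CR' CX0 by simp
  have \<epsilon>1: "\<epsilon> * CR \<le> r" "\<epsilon> * CX \<le> r" "\<epsilon> * CR' \<le> 1 / 2"
  proof -
    have "\<epsilon> * CR \<le> r / (CR + CX + 1) * CR" unfolding \<epsilon>_def using CR by (intro mult_right_mono) auto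
    also have "\<dots> \<le> r" using CR CX0 r0 by (simp add: field_simps)
    finally show "\<epsilon> * CR \<le> r" .
    have "\<epsilon> * CX \<le> r / (CR + CX + 1) * CX" unfolding \<epsilon>_def using CX0 by (intro mult_right_mono) auto
    also have "\<dots> \<le> r" using CR CX0 r0 by (simp add: field_simps)
    finally show "\<epsilon> * CX \<le> r" .
    have "\<epsilon> * CR' \<le> 1 / (2 * CR' + 2) * CR'" unfolding \<epsilon>_def using CR' by (intro mult_right_mono) auto
    also have "\<dots> \<le> 1 / 2" using CR' by (simp add: field_simps)
    finally show "\<epsilon> * CR' \<le> 1 / 2" .
  qed
  define A :: "complex^2^2" where "A = vector [vector [1, s], vector [0, of_real \<epsilon>]]"
  have A: "(A *v y) $ 1 = y$1 + s * y$2" "(A *v y) $ 2 = of_real \<epsilon> * y$2" for y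
    unfolding A_def mv2 by simp_all
  have detA: "det22 A \<noteq> 0" unfolding A_def det22_def using \<epsilon>0 by simp
  define H where "H v = A *v g v" for v
  have Hf: "forms d H" unfolding H_def by (rule forms_mv[OF gf])
  define Q where "Q = smult (of_real \<epsilon>) p2"
  have HPQ: "H (vector [1, z]) = vector [poly Dp z, poly Q z]" for z
    unfolding H_def Q_def by (simp add: vec_eq_iff forall_2 A Dp p2)
  define T where "T z = of_real \<epsilon> * R z" for z
  define T' where "T' z = of_real \<epsilon> * R' z" for z
  have dT: "(T has_field_derivative T' z) (at z)" if "poly Dp z \<noteq> 0" for z
    unfolding T_def T'_def by (intro DERIV_cmult dR that)
  have T'b: "norm (T' z) \<le> 1 / 2" if "z \<in> cball 0 r" for z
  proof -
    have "norm (T' z) = \<epsilon> * norm (R' z)" unfolding T'_def using \<epsilon>0 by (simp add: norm_mult)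
    also have "\<dots> \<le> \<epsilon> * CR'" using CR'(2)[OF that] \<epsilon>0 by (intro mult_left_mono) auto
    finally show ?thesis using \<epsilon>1 by simp
  qed
  have Tmap: "T z \<in> cball 0 r" if "z \<in> cball 0 r" for z
  proof -
    have "norm (T z) = \<epsilon> * norm (R z)" unfolding T_def using \<epsilon>0 by (simp add: norm_mult)
    also have "\<dots> \<le> \<epsilon> * CR" using CR(2)[OF that] \<epsilon>0 by (intro mult_left_mono) auto
    finally show ?thesis using \<epsilon>1 by simp
  qed
  have Tlip: "norm (T x - T y) \<le> 1 / 2 * norm (x - y)" if "x \<in> cball 0 r" "y \<in> cball 0 r" for x y
  proof (rule field_differentiable_bound[of "cball 0 r" T T' "1/2"])
    show "convex (cball (0::complex) r)" by simp
    show "(T has_field_derivative T' z) (at z within cball 0 r)" if "z \<in> cball 0 r" for z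
      using dT[OF rD[OF that]] by (rule has_field_derivative_at_within)
    show "norm (T' z) \<le> 1 / 2" if "z \<in> cball 0 r" for z using T'b[OF that] .
  qed (use that in auto)
  obtain zs where zs: "zs \<in> cball 0 r" "T zs = zs"
  proof -
    have "\<exists>!x\<in>cball 0 r. T x = x"
    proof (rule Banach_fix[of "cball 0 r" "1/2"])
      show "complete (cball (0::complex) r)" by (simp add: complete_eq_closed)
      show "cball (0::complex) r \<noteq> {}" using r0 by simp
      show "T ` cball 0 r \<subseteq> cball 0 r" using Tmap by auto
      show "dist (T x) (T y) \<le> 1 / 2 * dist x y" if "x \<in> cball 0 r" "y \<in> cball 0 r" for x y
        using Tlip[OF that] by (simp add: dist_norm)
    qed auto
    then show ?thesis using that by blast
  qed
  have HT: "H (vector [1, z]) = poly Dp z *s vector [1, T z]" if "poly Dp z \<noteq> 0" for z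
    unfolding HPQ using that by (simp add: vec_eq_iff forall_2 Q_def T_def R_def)
  have iterT: "(T ^^ k) z \<in> cball 0 r \<and> (\<exists>m. m \<noteq> 0 \<and> (H ^^ k) (vector [1, z]) = m *s vector [1, (T ^^ k) z])"
    if "z \<in> cball 0 r" for z k
  proof (induction k)
    case 0 then show ?case using that by (intro conjI exI[of _ 1]) auto
  next
    case (Suc k)
    then obtain m where m: "m \<noteq> 0" "(H ^^ k) (vector [1, z]) = m *s vector [1, (T ^^ k) z]"
      and tk: "(T ^^ k) z \<in> cball 0 r" by blast
    have "(H ^^ Suc k) (vector [1, z]) = (m ^ d * poly Dp ((T ^^ k) z)) *s vector [1, (T ^^ Suc k) z]"
      using m(2) HT[OF rD[OF tk]] by (simp add: forms_homog[OF Hf])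
    moreover have "m ^ d * poly Dp ((T ^^ k) z) \<noteq> 0" using m(1) rD[OF tk] by simp
    ultimately show ?case using Tmap[OF tk] by (intro conjI exI[of _ "m ^ d * poly Dp ((T ^^ k) z)"]) auto
  qed
  have contr: "norm ((T ^^ k) z - zs) \<le> (1/2) ^ k * norm (z - zs)" if "z \<in> cball 0 r" for z k
  proof (induction k)
    case 0 then show ?case by simp
  next
    case (Suc k)
    have "norm ((T ^^ Suc k) z - zs) = norm (T ((T ^^ k) z) - T zs)" using zs by simp
    also have "\<dots> \<le> 1/2 * norm ((T ^^ k) z - zs)" using Tlip iterT[OF that] zs by blast
    also have "\<dots> \<le> 1/2 * ((1/2) ^ k * norm (z - zs))" using Suc by simp
    finally show ?case by simp
  qed
  define q :: "complex^2" where "q = vector [1, zs]"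
  have Dzs: "poly Dp zs \<noteq> 0" using rD zs by simp
  have Hq: "H q = poly Dp zs *s q" unfolding q_def using HT[OF Dzs] zs by simp
  have Qzs: "poly Q zs = zs * poly Dp zs"
    using zs(2) Dzs unfolding T_def R_def Q_def by (simp add: field_simps)
  have att: "attracting_periodic H q 1"
    unfolding attracting_periodic_def
  proof (intro conjI exI allI impI)
    show "q \<noteq> 0" unfolding q_def by (rule vnz)
    show "1 \<le> (1::nat)" by simp
    show "(H ^^ 1) q = poly Dp zs *s q" using Hq by simp
    fix w assume w: "det2 q w \<noteq> 0"
    have ml: "det2 q (dirderiv H q w) = (poly (pderiv Q) zs - zs * poly (pderiv Dp) zs) * det2 q w"
      unfolding q_def by (rule mult_lemma[OF Hf HPQ Qzs])
    have "T' zs * poly Dp zs = poly (pderiv Q) zs - zs * poly (pderiv Dp) zs"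
    proof -
      have "T' zs * poly Dp zs = of_real \<epsilon> * poly (pderiv p2) zs - (of_real \<epsilon> * poly p2 zs / poly Dp zs) * poly (pderiv Dp) zs"
        unfolding T'_def R'_def using Dzs by (simp add: field_simps)
      also have "of_real \<epsilon> * poly p2 zs / poly Dp zs = zs" using zs(2) unfolding T_def R_def by simp
      finally show ?thesis unfolding Q_def by (simp add: pderiv_smult)
    qed
    then have "cmod (poly (pderiv Q) zs - zs * poly (pderiv Dp) zs) \<le> 1/2 * cmod (poly Dp zs)"
      using T'b[OF zs(1)] by (metis mult_right_mono norm_ge_zero norm_mult)
    also have "\<dots> < cmod (poly Dp zs)" using Dzs by simp
    finally have "cmod (poly (pderiv Q) zs - zs * poly (pderiv Dp) zs) * cmod (det2 q w) < cmod (poly Dp zs) * cmod (det2 q w)"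
      using w by (intro mult_strict_right_mono) auto
    then show "cmod (det2 q (dirderiv (H ^^ 1) q w)) < cmod (poly Dp zs * det2 q w)"
      by (simp add: ml norm_mult)
  qed
  have "hyp1 H"
    unfolding hyp1_def
  proof (intro allI impI)
    fix c assume cc: "critical_pt H c"
    have "critical_pt g c" using crit_mv[OF gf detA] cc unfolding H_def by simp
    then obtain m x where m: "m \<noteq> 0" and x: "x \<in> X" and cx: "c = m *s x" using Xcrit by blast
    have gxY: "g x \<in> Y" unfolding Y_def using x by simp
    define Dx where "Dx = g x $ 1 + s * g x $ 2"
    have Dx0: "Dx \<noteq> 0" unfolding Dx_def using s[OF gxY] .
    define z1 where "z1 = of_real \<epsilon> * g x $ 2 / Dx"
    have z1: "z1 \<in> cball 0 r"
    proof -
      have "norm z1 = \<epsilon> * (cmod (g x $ 2) / cmod Dx)" unfolding z1_def using \<epsilon>0 by (simp add: norm_mult norm_divide)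
      also have "\<dots> \<le> \<epsilon> * CX" using CX[OF x] \<epsilon>0 unfolding Dx_def by (intro mult_left_mono) auto
      finally show ?thesis using \<epsilon>1 by simp
    qed
    have e: "Dx * z1 = of_real \<epsilon> * g x $ 2" unfolding z1_def using Dx0 by simp
    have "H x = vector [Dx, Dx * z1]" unfolding H_def e by (simp add: vec_eq_iff forall_2 A Dx_def)
    also have "\<dots> = Dx *s vector [1, z1]" by (simp add: vec_eq_iff forall_2)
    finally have Hx: "H x = Dx *s vector [1, z1]" .
    have "(\<lambda>k. pdist ((H ^^ Suc k) c) q) \<longlonglongrightarrow> 0"
    proof (rule tendsto_sandwich[of "\<lambda>_. 0" _ _ "\<lambda>k. (1/2) ^ k * norm (z1 - zs)"])
      show "\<forall>\<^sub>F n in sequentially. 0 \<le> pdist ((H ^^ Suc n) c) q" by (simp add: pdist_nonneg)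
      show "((\<lambda>_. 0::real) \<longlongrightarrow> 0) sequentially" by simp
      have "(\<lambda>k. (1/2::real) ^ k * norm (z1 - zs)) \<longlonglongrightarrow> 0 * norm (z1 - zs)"
        by (intro tendsto_intros LIMSEQ_power_zero) simp
      then show "(\<lambda>k. (1/2::real) ^ k * norm (z1 - zs)) \<longlonglongrightarrow> 0" by simp
      show "\<forall>\<^sub>F n in sequentially. pdist ((H ^^ Suc n) c) q \<le> (1/2) ^ n * norm (z1 - zs)"
      proof (intro always_eventually allI)
        fix k
        obtain m' where m': "m' \<noteq> 0" "(H ^^ k) (vector [1, z1]) = m' *s vector [1, (T ^^ k) z1]"
          using iterT[OF z1] by blast
        have "(H ^^ Suc k) c = (H ^^ k) (H c)" by (simp only: funpow_Suc_right comp_def)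
        also have "H c = (m ^ d * Dx) *s vector [1, z1]" unfolding cx forms_homog[OF Hf] Hx by simp
        also have "(H ^^ k) \<dots> = ((m ^ d * Dx) ^ (d ^ k) * m') *s vector [1, (T ^^ k) z1]"
          unfolding iter_homog[OF Hf] m'(2) by simp
        finally have e: "(H ^^ Suc k) c = ((m ^ d * Dx) ^ (d ^ k) * m') *s vector [1, (T ^^ k) z1]" .
        have "(m ^ d * Dx) ^ (d ^ k) * m' \<noteq> 0" using m Dx0 m' by simp
        then have "pdist ((H ^^ Suc k) c) q = pdist (vector [1, (T ^^ k) z1]) q"
          unfolding e by (rule pdist_scale1)
        also have "\<dots> \<le> norm ((T ^^ k) z1 - zs)" unfolding q_def by (rule pdist_affine)
        also have "\<dots> \<le> (1/2) ^ k * norm (z1 - zs)" by (rule contr[OF z1])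
        finally show "pdist ((H ^^ Suc k) c) q \<le> (1/2) ^ k * norm (z1 - zs)" .
      qed
    qed
    then have "(\<lambda>k. pdist ((H ^^ (k * 1)) c) q) \<longlonglongrightarrow> 0" by (simp add: LIMSEQ_imp_Suc)
    then show "\<exists>q. in_attr_basin H q 1 c" using att unfolding in_attr_basin_def by blast
  qed
  then show ?thesis using detA unfolding H_def by blast
qed

lemma lin3_eq: "lin3 b x = b$1 * x$1 + b$2 * x$2 + b$3 * x$3"
  unfolding lin3_def by (simp add: sum_3)

lemma basis_case:
  fixes p b1 b2 :: "complex^3"
  assumes k: "p$k \<noteq> 0"
    and ker: "\<And>x. lin3 b1 x = 0 \<and> lin3 b2 x = 0 \<Longrightarrow> x = (x$k / p$k) *s p"
    and kerc: "lin3 b1 p = 0" "lin3 b2 p = 0"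
    and surj: "\<And>y1 y2. \<exists>x. lin3 b1 x = y1 \<and> lin3 b2 x = y2"
    and span: "\<And>w. lin3 p w = 0 \<Longrightarrow> \<exists>s t. w = s *s b1 + t *s b2"
    and inpl: "lin3 p b1 = 0" "lin3 p b2 = 0"
    and ind: "\<And>s t. s *s b1 + t *s b2 = 0 \<Longrightarrow> s = 0 \<and> t = 0"
  shows "(\<forall>x. (lin3 b1 x = 0 \<and> lin3 b2 x = 0) \<longleftrightarrow> (\<exists>c. x = c *s p)) \<and>
     (\<forall>y1 y2. \<exists>x. lin3 b1 x = y1 \<and> lin3 b2 x = y2) \<and>
     {w. lin3 p w = 0} = {s *s b1 + t *s b2 | s t. True} \<and>
     (\<forall>s t. s *s b1 + t *s b2 = 0 \<longrightarrow> s = 0 \<and> t = 0)"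
proof (intro conjI allI impI)
  fix x
  show "(lin3 b1 x = 0 \<and> lin3 b2 x = 0) \<longleftrightarrow> (\<exists>c. x = c *s p)"
  proof
    assume "lin3 b1 x = 0 \<and> lin3 b2 x = 0" then show "\<exists>c. x = c *s p" using ker by blast
  next
    assume "\<exists>c. x = c *s p"
    then obtain c where "x = c *s p" by blast
    then have "lin3 b1 x = c * lin3 b1 p" "lin3 b2 x = c * lin3 b2 p" unfolding lin3_eq by (simp_all add: algebra_simps)
    then show "lin3 b1 x = 0 \<and> lin3 b2 x = 0" using kerc by simp
  qed
next
  show "{w. lin3 p w = 0} = {s *s b1 + t *s b2 | s t. True}"
  proof (intro set_eqI iffI)
    fix w assume "w \<in> {w. lin3 p w = 0}" then show "w \<in> {s *s b1 + t *s b2 | s t. True}" using span by auto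
  next
    fix w assume "w \<in> {s *s b1 + t *s b2 | s t. True}"
    then obtain s t where "w = s *s b1 + t *s b2" by blast
    then have "lin3 p w = s * lin3 p b1 + t * lin3 p b2" unfolding lin3_eq by (simp add: algebra_simps)
    then show "w \<in> {w. lin3 p w = 0}" using inpl by simp
  qed
qed (use surj ind in auto)

lemma basis3:
  fixes p :: "complex^3"
  assumes p0: "p \<noteq> 0"
  shows "\<exists>b1 b2. (\<forall>x. (lin3 b1 x = 0 \<and> lin3 b2 x = 0) \<longleftrightarrow> (\<exists>c. x = c *s p)) \<and>
     (\<forall>y1 y2. \<exists>x. lin3 b1 x = y1 \<and> lin3 b2 x = y2) \<and>
     {w. lin3 p w = 0} = {s *s b1 + t *s b2 | s t. True} \<and>
     (\<forall>s t. s *s b1 + t *s b2 = 0 \<longrightarrow> s = 0 \<and> t = 0)"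
proof -
  consider "p$3 \<noteq> 0" | "p$2 \<noteq> 0" | "p$1 \<noteq> 0" using p0 by (auto simp: vec_eq_iff forall_3)
  then show ?thesis
  proof cases
    case 1
    show ?thesis
    proof (rule exI, rule exI, rule basis_case[OF 1])
      fix x :: "complex^3"
      assume "lin3 (vector [p$3, 0, - p$1]) x = 0 \<and> lin3 (vector [0, p$3, - p$2]) x = 0"
      then show "x = (x$3 / p$3) *s p" using 1 unfolding lin3_eq
        by (simp add: vec_eq_iff forall_3 field_simps; simp add: algebra_simps)
    next
      fix y1 y2 :: complex
      show "\<exists>x. lin3 (vector [p$3, 0, - p$1]) x = y1 \<and> lin3 (vector [0, p$3, - p$2]) x = y2"
        using 1 by (intro exI[of _ "vector [y1 / p$3, y2 / p$3, 0]"]) (simp add: lin3_eq)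
    next
      fix w :: "complex^3" assume "lin3 p w = 0"
      then have "w = (w$1 / p$3) *s vector [p$3, 0, - p$1] + (w$2 / p$3) *s vector [0, p$3, - p$2]"
        using 1 unfolding lin3_eq
        by (auto simp: vec_eq_iff forall_3 field_simps; algebra)
      then show "\<exists>s t. w = s *s vector [p$3, 0, - p$1] + t *s vector [0, p$3, - p$2]" by blast
    next
      fix s t :: complex assume "s *s vector [p$3, 0, - p$1] + t *s vector [0, p$3, - p$2] = (0::complex^3)"
      then show "s = 0 \<and> t = 0" using 1 by (auto simp: vec_eq_iff forall_3 dest: spec[of _ 1] spec[of _ 2])
    qed (simp_all add: lin3_eq algebra_simps)
  next
    case 2
    show ?thesis
    proof (rule exI, rule exI, rule basis_case[OF 2])
      fix x :: "complex^3"
      assume "lin3 (vector [p$2, - p$1, 0]) x = 0 \<and> lin3 (vector [0, - p$3, p$2]) x = 0"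
      then show "x = (x$2 / p$2) *s p" using 2 unfolding lin3_eq
        by (simp add: vec_eq_iff forall_3 field_simps; simp add: algebra_simps)
    next
      fix y1 y2 :: complex
      show "\<exists>x. lin3 (vector [p$2, - p$1, 0]) x = y1 \<and> lin3 (vector [0, - p$3, p$2]) x = y2"
        using 2 by (intro exI[of _ "vector [y1 / p$2, 0, y2 / p$2]"]) (simp add: lin3_eq)
    next
      fix w :: "complex^3" assume "lin3 p w = 0"
      then have "w = (w$1 / p$2) *s vector [p$2, - p$1, 0] + (w$3 / p$2) *s vector [0, - p$3, p$2]"
        using 2 unfolding lin3_eq
        by (auto simp: vec_eq_iff forall_3 field_simps; algebra)
      then show "\<exists>s t. w = s *s vector [p$2, - p$1, 0] + t *s vector [0, - p$3, p$2]" by blast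
    next
      fix s t :: complex assume "s *s vector [p$2, - p$1, 0] + t *s vector [0, - p$3, p$2] = (0::complex^3)"
      then show "s = 0 \<and> t = 0" using 2 by (auto simp: vec_eq_iff forall_3 dest: spec[of _ 1] spec[of _ 3])
    qed (simp_all add: lin3_eq algebra_simps)
  next
    case 3
    show ?thesis
    proof (rule exI, rule exI, rule basis_case[OF 3])
      fix x :: "complex^3"
      assume "lin3 (vector [- p$2, p$1, 0]) x = 0 \<and> lin3 (vector [- p$3, 0, p$1]) x = 0"
      then show "x = (x$1 / p$1) *s p" using 3 unfolding lin3_eq
        by (simp add: vec_eq_iff forall_3 field_simps; simp add: algebra_simps)
    next
      fix y1 y2 :: complex
      show "\<exists>x. lin3 (vector [- p$2, p$1, 0]) x = y1 \<and> lin3 (vector [- p$3, 0, p$1]) x = y2"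
        using 3 by (intro exI[of _ "vector [0, y1 / p$1, y2 / p$1]"]) (simp add: lin3_eq)
    next
      fix w :: "complex^3" assume "lin3 p w = 0"
      then have "w = (w$2 / p$1) *s vector [- p$2, p$1, 0] + (w$3 / p$1) *s vector [- p$3, 0, p$1]"
        using 3 unfolding lin3_eq
        by (auto simp: vec_eq_iff forall_3 field_simps; algebra)
      then show "\<exists>s t. w = s *s vector [- p$2, p$1, 0] + t *s vector [- p$3, 0, p$1]" by blast
    next
      fix s t :: complex assume "s *s vector [- p$2, p$1, 0] + t *s vector [- p$3, 0, p$1] = (0::complex^3)"
      then show "s = 0 \<and> t = 0" using 3 by (auto simp: vec_eq_iff forall_3 dest: spec[of _ 2] spec[of _ 3])
    qed (simp_all add: lin3_eq algebra_simps)
  qed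
qed

lemma core0:
  assumes gf: "forms 0 g" and nz: "\<And>v. v \<noteq> 0 \<Longrightarrow> g v \<noteq> 0"
  shows "hyp1 g"
proof -
  have const: "g v = g w" for v w
  proof -
    have "g v $ k = g w $ k" for k
    proof -
      obtain A where "\<And>v. g v $ k = hpoly2 0 A v" using gf unfolding forms_def isform_def by blast
      then show ?thesis by (simp add: hpoly2_def)
    qed
    then show ?thesis by (simp add: vec_eq_iff)
  qed
  define K where "K = g (vector [1, 0])"
  have gK: "g v = K" for v unfolding K_def by (rule const)
  have K0: "K \<noteq> 0" unfolding K_def by (rule nz) (metis vector_2(1) zero_index zero_neq_one)
  show ?thesis unfolding hyp1_def
  proof (intro allI impI exI)
    fix c
    have att: "attracting_periodic g K 1"
      unfolding attracting_periodic_def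
    proof (intro conjI exI[of _ 1] allI impI)
      show "K \<noteq> 0" "1 \<le> (1::nat)" using K0 by auto
      show "(g ^^ 1) K = 1 *s K" by (simp add: gK)
      fix w assume w: "det2 K w \<noteq> 0"
      have "dirderiv (g ^^ 1) K w = 0" unfolding dirderiv_def by (simp add: gK vec_eq_iff)
      then show "cmod (det2 K (dirderiv (g ^^ 1) K w)) < cmod (1 * det2 K w)"
        using w by (simp add: det2_def)
    qed
    have "(\<lambda>k. pdist ((g ^^ (Suc k * 1)) c) K) \<longlonglongrightarrow> 0"
    proof -
      have "(g ^^ (Suc k * 1)) c = K" for k by (simp add: gK)
      then show ?thesis by (simp add: pdist_def det2_def)
    qed
    then have "(\<lambda>k. pdist ((g ^^ (k * 1)) c) K) \<longlonglongrightarrow> 0" by (rule LIMSEQ_imp_Suc)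
    then show "in_attr_basin g K 1 c" using att unfolding in_attr_basin_def by blast
  qed
qed

lemma core_all:
  assumes gf: "forms d g" and nz: "\<And>v. v \<noteq> 0 \<Longrightarrow> g v \<noteq> 0"
  shows "\<exists>A. det22 A \<noteq> 0 \<and> hyp1 (\<lambda>v. A *v g v)"
proof (cases "d = 0")
  case True
  define A :: "complex^2^2" where "A = vector [vector [1, 0], vector [0, 1]]"
  have "A *v y = y" for y unfolding A_def by (simp add: vec_eq_iff forall_2 mv2)
  moreover have "det22 A \<noteq> 0" unfolding A_def det22_def by simp
  moreover have "hyp1 g" using core0 gf nz True by blast
  ultimately show ?thesis by (intro exI[of _ A]) simp
next
  case False
  then show ?thesis using core[OF gf _ nz] by simp
qed

theorem mainTheorem8:
  fixes d :: nat and Fc :: "3 \<Rightarrow> nat \<Rightarrow> nat \<Rightarrow> complex"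
    and a p0 :: "complex^3"
  assumes f_map: "rat_map_P2 d Fc"
    and f_dom: "dominant d Fc"
    and a_nz: "a \<noteq> 0"
    and L0_not_exc: "\<not> exceptional d Fc (pline a)"
    and L0_disj: "pline a \<inter> indet d Fc = {}"
    and p0_nz: "p0 \<noteq> 0"
    and p0_notin: "p0 \<notin> pline a \<union> fimage d Fc (pline a)"
  shows "\<exists>M :: complex^3^3.
           {x. M *v x = 0} = {c *s p0 | c. True} \<and>
           range (\<lambda>x. M *v x) = {w. lin3 a w = 0} \<and>
           (\<forall>u1 u2 (G :: complex^2 \<Rightarrow> complex^2).
              {w. lin3 a w = 0} = {s *s u1 + t *s u2 | s t. True} \<and>
              (\<forall>s t. s *s u1 + t *s u2 = 0 \<longrightarrow> s = 0 \<and> t = 0) \<and>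
              (\<forall>v. (G v $ 1) *s u1 + (G v $ 2) *s u2
                     = M *v Fv d Fc ((v $ 1) *s u1 + (v $ 2) *s u2))
              \<longrightarrow> rat_map_P1 d G \<and> hyperbolic G)"
proof -
  obtain l1 l2 where K: "\<And>x. (lin3 l1 x = 0 \<and> lin3 l2 x = 0) \<longleftrightarrow> (\<exists>c. x = c *s p0)"
    and Ls: "\<And>y1 y2. \<exists>x. lin3 l1 x = y1 \<and> lin3 l2 x = y2"
    using basis3[OF p0_nz] by blast
  obtain b1 b2 where Pl: "{w. lin3 a w = 0} = {s *s b1 + t *s b2 | s t. True}"
    and Bi: "\<And>s t. s *s b1 + t *s b2 = 0 \<Longrightarrow> s = 0 \<and> t = 0"
    using basis3[OF a_nz] by blast
  define \<Lambda> :: "complex^3^2" where "\<Lambda> = vector [l1, l2]"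
  have \<Lambda>v: "\<Lambda> *v x = vector [lin3 l1 x, lin3 l2 x]" for x
    unfolding \<Lambda>_def by (simp add: vec_eq_iff forall_2 matrix_vector_mult_def lin3_def)
  define B :: "complex^2^3" where "B = transpose (vector [b1, b2])"
  have Bk: "(B *v v) $ k = b1 $ k * v$1 + b2 $ k * v$2" for v k
    unfolding B_def by (simp add: matrix_vector_mult_def transpose_def sum_2 mult.commute)
  have Bv: "B *v v = v$1 *s b1 + v$2 *s b2" for v
    by (simp add: vec_eq_iff Bk mult.commute)
  have Bpl: "lin3 a (B *v v) = 0" for v using Pl unfolding Bv by blast
  have Binj: "v = 0" if "B *v v = 0" for v
    using Bi[of "v$1" "v$2"] that unfolding Bv by (simp add: vec_eq_iff forall_2)
  have Binj2: "x = y" if "B *v x = B *v y" for x y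
  proof -
    have "B *v (x - y) = 0" using that by (simp add: matrix_vector_mult_diff_distrib)
    then have "x - y = 0" by (rule Binj)
    then show ?thesis by simp
  qed
  define g where "g v = \<Lambda> *v Fv d Fc (B *v v)" for v
  have gf: "forms d g"
    unfolding forms_def
  proof
    fix k
    have "isform d (\<lambda>v. \<Sum>j\<in>UNIV. \<Lambda>$k$j * hpoly3 d (Fc j) (B *v v))"
      by (intro isform_sum isform_cmult hpoly3_lin[OF Bk]) simp
    then show "isform d (\<lambda>v. g v $ k)" unfolding g_def by (simp add: matrix_vector_mult_def Fv_def)
  qed
  have gnz: "g v \<noteq> 0" if v: "v \<noteq> 0" for v
  proof
    assume g0: "g v = 0"
    define x where "x = B *v v"
    have x0: "x \<noteq> 0" unfolding x_def using Binj v by blast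
    have xpl: "x \<in> pline a" unfolding pline_def x_def using x0 Bpl unfolding x_def by simp
    have "lin3 l1 (Fv d Fc x) = 0 \<and> lin3 l2 (Fv d Fc x) = 0"
      using g0 unfolding g_def \<Lambda>v x_def by (simp add: vec_eq_iff forall_2)
    then obtain c where c: "Fv d Fc x = c *s p0" using K by blast
    show False
    proof (cases "c = 0")
      case True
      then have "x \<in> indet d Fc" unfolding indet_def using x0 c by simp
      then show False using L0_disj xpl by blast
    next
      case False
      have xi: "x \<notin> indet d Fc" using L0_disj xpl by blast
      have "p0 = (1 / c) *s Fv d Fc x" using c False by (simp add: vec_eq_iff)
      then have "p0 \<in> {c *s Fv d Fc v | c v. c \<noteq> 0 \<and> v \<in> pline a \<and> v \<notin> indet d Fc}"
        using False xpl xi by (intro CollectI exI[of _ "1 / c"] exI[of _ x]) simp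
      then have "p0 \<in> fimage d Fc (pline a)"
        unfolding fimage_def zclosure_def using p0_nz by (intro CollectI conjI allI impI) auto
      then show False using p0_notin by blast
    qed
  qed
  obtain A where dA: "det22 A \<noteq> 0" and hA: "hyp1 (\<lambda>v. A *v g v)" using core_all[OF gf gnz] by blast
  define M where "M = B ** (A ** \<Lambda>)"
  have Mv: "M *v x = B *v (A *v (\<Lambda> *v x))" for x by (simp add: M_def matrix_vector_mul_assoc)
  show ?thesis
  proof (intro exI[of _ M] conjI allI impI)
    show "{x. M *v x = 0} = {c *s p0 | c. True}"
    proof (intro set_eqI)
      fix x
      have "M *v x = 0 \<longleftrightarrow> \<Lambda> *v x = 0"
        unfolding Mv using Binj mv_zero_iff[OF dA] by (auto simp: matrix_vector_mult_0_right)
      also have "\<dots> \<longleftrightarrow> (\<exists>c. x = c *s p0)" unfolding \<Lambda>v K[symmetric] by (simp add: vec_eq_iff forall_2)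
      finally show "x \<in> {x. M *v x = 0} \<longleftrightarrow> x \<in> {c *s p0 | c. True}" by simp
    qed
    show "range (\<lambda>x. M *v x) = {w. lin3 a w = 0}"
    proof (intro set_eqI iffI)
      fix w assume "w \<in> range (\<lambda>x. M *v x)"
      then show "w \<in> {w. lin3 a w = 0}" unfolding Mv using Bpl by auto
    next
      fix w assume "w \<in> {w. lin3 a w = 0}"
      then obtain s t where w: "w = s *s b1 + t *s b2" using Pl by blast
      define y where "y = inv22 A *v vector [s, t]"
      obtain x where x: "lin3 l1 x = y$1 \<and> lin3 l2 x = y$2" using Ls by blast
      have "\<Lambda> *v x = y" unfolding \<Lambda>v using x by (simp add: vec_eq_iff forall_2)
      then have "M *v x = w" unfolding Mv y_def using inv22_2[OF dA, of "vector [s, t]"] by (simp add: Bv w)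
      then show "w \<in> range (\<lambda>x. M *v x)" by (metis rangeI)
    qed
    fix u1 u2 :: "complex^3" and G :: "complex^2 \<Rightarrow> complex^2"
    assume hyp: "{w. lin3 a w = 0} = {s *s u1 + t *s u2 | s t. True} \<and>
              (\<forall>s t. s *s u1 + t *s u2 = 0 \<longrightarrow> s = 0 \<and> t = 0) \<and>
              (\<forall>v. (G v $ 1) *s u1 + (G v $ 2) *s u2 = M *v Fv d Fc ((v $ 1) *s u1 + (v $ 2) *s u2))"
    then have Pu: "{w. lin3 a w = 0} = {s *s u1 + t *s u2 | s t. True}"
      and Ui: "\<And>s t. s *s u1 + t *s u2 = 0 \<Longrightarrow> s = 0 \<and> t = 0"
      and Gh: "\<And>v. (G v $ 1) *s u1 + (G v $ 2) *s u2 = M *v Fv d Fc ((v $ 1) *s u1 + (v $ 2) *s u2)"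
      by blast+
    have "u1 \<in> {w. lin3 a w = 0}" unfolding Pu by (intro CollectI exI[of _ 1] exI[of _ 0]) simp
    then obtain s1 t1 where u1: "u1 = s1 *s b1 + t1 *s b2" unfolding Pl by blast
    have "u2 \<in> {w. lin3 a w = 0}" unfolding Pu by (intro CollectI exI[of _ 0] exI[of _ 1]) simp
    then obtain s2 t2 where u2: "u2 = s2 *s b1 + t2 *s b2" unfolding Pl by blast
    define C :: "complex^2^2" where "C = vector [vector [s1, s2], vector [t1, t2]]"
    have BC: "B *v (C *v v) = v$1 *s u1 + v$2 *s u2" for v
      unfolding Bv u1 u2 C_def mv2 by (simp add: vec_eq_iff algebra_simps)
    have dC: "det22 C \<noteq> 0"
    proof
      assume det0: "det22 C = 0"
      have ex: "\<exists>v. v \<noteq> 0 \<and> C *v v = 0"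
      proof (cases "s1 = 0 \<and> s2 = 0")
        case False
        then have "vector [s2, - s1] \<noteq> (0::complex^2)" by (auto simp: vec_eq_iff forall_2)
        moreover have "C *v vector [s2, - s1] = 0"
          using det0 unfolding C_def det22_def by (simp add: vec_eq_iff forall_2 mv2 algebra_simps)
        ultimately show ?thesis by blast
      next
        case s: True
        show ?thesis
        proof (cases "t1 = 0 \<and> t2 = 0")
          case False
          then have "vector [t2, - t1] \<noteq> (0::complex^2)" by (auto simp: vec_eq_iff forall_2)
          moreover have "C *v vector [t2, - t1] = 0"
            using s unfolding C_def by (simp add: vec_eq_iff forall_2 mv2 algebra_simps)
          ultimately show ?thesis by blast
        next
          case True
          have "vector [1, 0] \<noteq> (0::complex^2)" by (metis vector_2(1) zero_index zero_neq_one)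
          moreover have "C *v vector [1, 0] = 0"
            using s True unfolding C_def by (simp add: vec_eq_iff forall_2 mv2)
          ultimately show ?thesis by blast
        qed
      qed
      then obtain v where v: "v \<noteq> 0" "C *v v = 0" by blast
      have "v$1 *s u1 + v$2 *s u2 = 0" using BC[of v] v(2) by simp
      then have "v$1 = 0 \<and> v$2 = 0" by (rule Ui)
      then show False using v(1) by (simp add: vec_eq_iff forall_2)
    qed
    have Geq: "G v = inv22 C *v (A *v g (C *v v))" for v :: "complex^2"
    proof -
      have "B *v (C *v G v) = (G v)$1 *s u1 + (G v)$2 *s u2" by (rule BC)
      also have "\<dots> = M *v Fv d Fc (v$1 *s u1 + v$2 *s u2)" by (rule Gh)
      also have "v$1 *s u1 + v$2 *s u2 = B *v (C *v v)" by (rule BC[symmetric])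
      also have "M *v Fv d Fc (B *v (C *v v)) = B *v (A *v g (C *v v))" by (simp only: Mv g_def)
      finally have "B *v (C *v G v) = B *v (A *v g (C *v v))" .
      then have "C *v G v = A *v g (C *v v)" by (rule Binj2)
      then have "inv22 C *v (C *v G v) = inv22 C *v (A *v g (C *v v))" by simp
      then show ?thesis unfolding inv22_1[OF dC] .
    qed
    have GF: "forms d G"
    proof -
      have "forms d (\<lambda>v. inv22 C *v (\<lambda>v. A *v g v) (C *v v))"
        by (intro forms_mv forms_comp gf)
      moreover have "G = (\<lambda>v. inv22 C *v (\<lambda>v. A *v g v) (C *v v))" using Geq by (simp add: fun_eq_iff)
      ultimately show ?thesis by simp
    qed
    have "hyp1 G" by (rule hyp1_conj[OF dC forms_mv[OF gf] Geq hA])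
    then show "hyperbolic G" by (rule hyp1_imp)
    show "rat_map_P1 d G"
      unfolding rat_map_P1_def
    proof (intro conjI allI impI)
      obtain A1 where A1: "\<And>v. G v $ 1 = hpoly2 d A1 v" using GF unfolding forms_def isform_def by blast
      obtain A2 where A2: "\<And>v. G v $ 2 = hpoly2 d A2 v" using GF unfolding forms_def isform_def by blast
      show "\<exists>A B. \<forall>v. G v $ 1 = hpoly2 d A v \<and> G v $ 2 = hpoly2 d B v" using A1 A2 by blast
      fix v :: "complex^2" assume v: "v \<noteq> 0"
      have "C *v v \<noteq> 0" using v mv_zero_iff[OF dC] by simp
      then have "g (C *v v) \<noteq> 0" by (rule gnz)
      then have "A *v g (C *v v) \<noteq> 0" using mv_zero_iff[OF dA] by simp
      then show "G v \<noteq> 0" unfolding Geq using mv_zero_iff[OF det22_inv[OF dC]] by simp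
    qed
  qed
qed

end
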